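(* Consider the optimisation problem of choosing a set of bins $\{\Delta_b\}_{b=1}^{B}$ (disjoint intervals whose union is $[0,1]$, with $B$ arbitrary) that minimises $\sum_{b=1}^{B} \frac{N_b}{N}\,\mathrm{D}(\mathcal{D}_b^y,\widehat{P}_b)$ subject to $\widehat{P}_1 \le \dots \le \widehat{P}_B$, where $\mathrm{D}(\mathcal{D}_b^y,\widehat{P}_b) = \frac{1}{N_b}\sum_{y_i\in\mathcal{D}_b^y}(y_i-\widehat{P}_b)^2$ is the within-bin variance. The minimum of this problem is attained at the bins computed as follows: sort the labels $\{y_i\}_{i=1}^N$ in ascending order of the model predictions $\{P_\theta(x_i)\}_{i=1}^N$; apply the pool-adjacent-violators algorithm (PAVA), i.e. monotonic regression under the squared error $\sum_{i=1}^N(\widehat{y}_i-y_i)^2$, to obtain a monotonically increasing fitted sequence $\{\widehat{y}_i\}_{i=1}^N$; and place a bin boundary at $(P_\theta(x_{i-1})+P_\theta(x_i))/2$ for every $i$ with $\widehat{y}_{i-1}\ne\widehat{y}_i$ (the first bin starting at $0$ and the last bin ending at $1$).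
   Context: Binary classification with data $\mathcal{D}=\{(x_i,y_i)\}_{i=1}^N$, $y_i\in\{0,1\}$, and a probabilistic classifier $P_\theta:\mathcal{X}\to[0,1]$. For a set of bins $\{\Delta_b\}_{b=1}^B$, the data subsets are $\mathcal{D}_b=\{(x_i,y_i)\in\mathcal{D}\mid P_\theta(x_i)\in\Delta_b\}$, with label set $\mathcal{D}_b^y$, size $N_b$, and empirical probability $\widehat{P}_b=\frac{1}{N_b}\sum_{y_i\in\mathcal{D}_b^y}y_i$. It is assumed that the solution of the optimisation problem is not the trivial single bin $\{[0,1]\}$. *)

theory Defs
  imports "HOL-Analysis.Analysis"
begin

text \<open>Data: indices 0..N-1, predictions p i, labels y i.
  A binning is a list of sets (bins) Delta_1 ... Delta_B.\<close>

definition bin_idx :: "nat \<Rightarrow> (nat \<Rightarrow> real) \<Rightarrow> real set \<Rightarrow> nat set" where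
  "bin_idx N p \<Delta> = {i. i < N \<and> p i \<in> \<Delta>}"

definition bin_count :: "nat \<Rightarrow> (nat \<Rightarrow> real) \<Rightarrow> real set \<Rightarrow> nat" where
  "bin_count N p \<Delta> = card (bin_idx N p \<Delta>)"

definition bin_prob :: "nat \<Rightarrow> (nat \<Rightarrow> real) \<Rightarrow> (nat \<Rightarrow> real) \<Rightarrow> real set \<Rightarrow> real" where
  "bin_prob N p y \<Delta> = (\<Sum>i\<in>bin_idx N p \<Delta>. y i) / real (bin_count N p \<Delta>)"

definition bin_var :: "nat \<Rightarrow> (nat \<Rightarrow> real) \<Rightarrow> (nat \<Rightarrow> real) \<Rightarrow> real set \<Rightarrow> real" where
  "bin_var N p y \<Delta> =
     (\<Sum>i\<in>bin_idx N p \<Delta>. (y i - bin_prob N p y \<Delta>)^2) / real (bin_count N p \<Delta>)"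

definition binning_objective ::
  "nat \<Rightarrow> (nat \<Rightarrow> real) \<Rightarrow> (nat \<Rightarrow> real) \<Rightarrow> real set list \<Rightarrow> real" where
  "binning_objective N p y Bs =
     (\<Sum>b<length Bs. real (bin_count N p (Bs!b)) / real N * bin_var N p y (Bs!b))"

definition valid_binning :: "real set list \<Rightarrow> bool" where
  "valid_binning Bs \<longleftrightarrow>
     Bs \<noteq> [] \<and>
     (\<forall>b<length Bs. is_interval (Bs!b)) \<and>
     (\<forall>b<length Bs. \<forall>b'<length Bs. b \<noteq> b' \<longrightarrow> Bs!b \<inter> Bs!b' = {}) \<and>
     (\<Union>b<length Bs. Bs!b) = {0..1} \<and>
     (\<forall>b b'. b < b' \<and> b' < length Bs \<longrightarrow> (\<forall>x\<in>Bs!b. \<forall>x'\<in>Bs!b'. x < x'))"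

text \<open>Monotonicity constraint P_1 \<le> ... \<le> P_B (imposed on bins containing data;
  the empirical probability of an empty bin is undefined).\<close>
definition monotone_bins ::
  "nat \<Rightarrow> (nat \<Rightarrow> real) \<Rightarrow> (nat \<Rightarrow> real) \<Rightarrow> real set list \<Rightarrow> bool" where
  "monotone_bins N p y Bs \<longleftrightarrow>
     (\<forall>b b'. b < b' \<and> b' < length Bs \<and> bin_count N p (Bs!b) > 0 \<and> bin_count N p (Bs!b') > 0
        \<longrightarrow> bin_prob N p y (Bs!b) \<le> bin_prob N p y (Bs!b'))"

definition feasible_binning ::
  "nat \<Rightarrow> (nat \<Rightarrow> real) \<Rightarrow> (nat \<Rightarrow> real) \<Rightarrow> real set list \<Rightarrow> bool" where
  "feasible_binning N p y Bs \<longleftrightarrow> valid_binning Bs \<and> monotone_bins N p y Bs"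

text \<open>Monotonic (isotonic) regression under squared error: yhat is nondecreasing on 0..N-1
  and minimises the squared error to v among all nondecreasing sequences
  (this is what PAVA computes).\<close>
definition nondecr_on :: "nat \<Rightarrow> (nat \<Rightarrow> real) \<Rightarrow> bool" where
  "nondecr_on N z \<longleftrightarrow> (\<forall>i j. i \<le> j \<and> j < N \<longrightarrow> z i \<le> z j)"

definition isotonic_fit :: "nat \<Rightarrow> (nat \<Rightarrow> real) \<Rightarrow> (nat \<Rightarrow> real) \<Rightarrow> bool" where
  "isotonic_fit N v yhat \<longleftrightarrow> nondecr_on N yhat \<and>
     (\<forall>z. nondecr_on N z \<longrightarrow> (\<Sum>k<N. (yhat k - v k)^2) \<le> (\<Sum>k<N. (z k - v k)^2))"

text \<open>Bins computed from the fit: q k is the k-th smallest prediction; a boundary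
  (q(k-1)+q k)/2 is placed wherever yhat(k-1) \<noteq> yhat k; first bin starts at 0, last ends at 1.\<close>
definition pava_thresholds :: "nat \<Rightarrow> (nat \<Rightarrow> real) \<Rightarrow> (nat \<Rightarrow> real) \<Rightarrow> real list" where
  "pava_thresholds N q yhat =
     sorted_list_of_set ((\<lambda>k. (q (k - 1) + q k) / 2) ` {k. 0 < k \<and> k < N \<and> yhat (k - 1) \<noteq> yhat k})"

definition bins_of_thresholds :: "real list \<Rightarrow> real set list" where
  "bins_of_thresholds ts =
     map (\<lambda>j. let lo = (if j = 0 then 0 else ts!(j - 1)) in
               if j = length ts then {lo..1} else {lo..<ts!j}) [0..<Suc (length ts)]"

definition pava_bins :: "nat \<Rightarrow> (nat \<Rightarrow> real) \<Rightarrow> (nat \<Rightarrow> real) \<Rightarrow> real set list" where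
  "pava_bins N q yhat = bins_of_thresholds (pava_thresholds N q yhat)"

end

theory Submission
  imports Defs
begin

lemma level_mean:
  assumes fit: "isotonic_fit N v yhat" and k0: "k0 < N"
  shows "(\<Sum>k\<in>{k. k<N \<and> yhat k = yhat k0}. v k) = real (card {k. k<N \<and> yhat k = yhat k0}) * yhat k0"
proof -
  define c where "c = yhat k0"
  define L where "L = {k \<in> {..<N}. yhat k = c}"
  have Leq: "{k. k<N \<and> yhat k = yhat k0} = L" unfolding L_def c_def by auto
  have finL: "finite L" unfolding L_def by auto
  have k0L: "k0 \<in> L" unfolding L_def c_def using k0 by auto
  define n where "n = real (card L)"
  have n1: "n \<ge> 1" unfolding n_def using finL k0L
    by (metis One_nat_def card_gt_0_iff empty_iff less_eq_Suc_le of_nat_1 of_nat_le_iff)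
  define S where "S = (\<Sum>k\<in>L. c - v k)"
  have S0: "S = 0"
  proof (rule ccontr)
    assume Sne: "S \<noteq> 0"
    define D where "D = (\<lambda>k. \<bar>yhat k - c\<bar>) ` {k. k<N \<and> yhat k \<noteq> c}"
    define \<delta> where "\<delta> = (if D = {} then 1 else Min D)"
    have finD: "finite D" unfolding D_def by auto
    have dpos: "\<delta> > 0"
    proof (cases "D = {}")
      case True then show ?thesis unfolding \<delta>_def by simp
    next
      case False
      then have "Min D \<in> D" using finD by simp
      then show ?thesis unfolding \<delta>_def D_def using False by auto
    qed
    have dle: "\<delta> \<le> \<bar>yhat k - c\<bar>" if "k < N" "yhat k \<noteq> c" for k
    proof -
      have "\<bar>yhat k - c\<bar> \<in> D" unfolding D_def using that by auto
      then show ?thesis unfolding \<delta>_def using finD by auto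
    qed
    define \<eta> where "\<eta> = min (\<delta> / (2 * \<bar>S\<bar>)) (1 / n)"
    have etapos: "\<eta> > 0" unfolding \<eta>_def using dpos Sne n1 by auto
    have etan: "n * \<eta> \<le> 1"
      proof -
      have "n * \<eta> \<le> n * (1/n)" using n1 by (intro mult_left_mono) (auto simp: \<eta>_def)
      then show ?thesis using n1 by simp
    qed
    have etad: "\<bar>S\<bar> * \<eta> \<le> \<delta> / 2"
    proof -
      have "\<bar>S\<bar> * \<eta> \<le> \<bar>S\<bar> * (\<delta> / (2 * \<bar>S\<bar>))"
        by (intro mult_left_mono) (auto simp: \<eta>_def)
      also have "\<dots> = \<delta> / 2" using Sne by simp
      finally show ?thesis .
    qed
    define \<epsilon> where "\<epsilon> = - S * \<eta>"
    have epsd: "\<bar>\<epsilon>\<bar> < \<delta>" unfolding \<epsilon>_def using etad etapos dpos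
      by (simp add: abs_mult)
    define z where "z = (\<lambda>k. yhat k + (if yhat k = c then \<epsilon> else 0))"
    have nd: "nondecr_on N yhat" using fit unfolding isotonic_fit_def by auto
    have "nondecr_on N z"
      unfolding nondecr_on_def
    proof (intro allI impI)
      fix i j assume ij: "i \<le> j \<and> j < N"
      then have le: "yhat i \<le> yhat j" using nd unfolding nondecr_on_def by auto
      show "z i \<le> z j"
      proof (cases "yhat i = c")
        case True
        show ?thesis
        proof (cases "yhat j = c")
          case True then show ?thesis using \<open>yhat i = c\<close> unfolding z_def by simp
        next
          case False
          have "\<delta> \<le> \<bar>yhat j - c\<bar>" using dle[of j] ij False by auto
          then show ?thesis unfolding z_def using True False le epsd by auto
        qed
      next
        case False
        show ?thesis
        proof (cases "yhat j = c")
          case True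
          have "\<delta> \<le> \<bar>yhat i - c\<bar>" using dle[of i] ij False by auto
          then show ?thesis unfolding z_def using True False le epsd by auto
        next
          case False2: False
          then show ?thesis unfolding z_def using False le by auto
        qed
      qed
    qed
    then have le: "(\<Sum>k<N. (yhat k - v k)^2) \<le> (\<Sum>k<N. (z k - v k)^2)"
      using fit unfolding isotonic_fit_def by auto
    have pt: "(z k - v k)^2 = (yhat k - v k)^2 + (if yhat k = c then 2*\<epsilon>*(c - v k) + \<epsilon>^2 else 0)" for k
      unfolding z_def by (auto simp: power2_eq_square algebra_simps)
    have "(\<Sum>k<N. (z k - v k)^2) = (\<Sum>k<N. (yhat k - v k)^2) + (\<Sum>k<N. (if yhat k = c then 2*\<epsilon>*(c - v k) + \<epsilon>^2 else 0))"
      unfolding pt by (simp add: sum.distrib)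
    also have "(\<Sum>k<N. (if yhat k = c then 2*\<epsilon>*(c - v k) + \<epsilon>^2 else 0)) = (\<Sum>k\<in>L. 2*\<epsilon>*(c - v k) + \<epsilon>^2)"
      unfolding L_def by (rule sum.inter_filter[symmetric]) simp
    also have "\<dots> = 2*\<epsilon>*S + n*\<epsilon>^2"
      unfolding S_def n_def by (simp add: sum.distrib sum_distrib_left)
    finally have eq: "(\<Sum>k<N. (z k - v k)^2) = (\<Sum>k<N. (yhat k - v k)^2) + (2*\<epsilon>*S + n*\<epsilon>^2)" .
    have "2*\<epsilon>*S + n*\<epsilon>^2 = S^2 * \<eta> * (n*\<eta> - 2)"
      unfolding \<epsilon>_def by (simp add: power2_eq_square algebra_simps)
    moreover have "S^2 * \<eta> > 0" using Sne etapos by simp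
    moreover have "n*\<eta> - 2 < 0" using etan by simp
    ultimately have "2*\<epsilon>*S + n*\<epsilon>^2 < 0" by (metis mult_pos_neg)
    then show False using le eq by simp
  qed
  have "S = n * c - (\<Sum>k\<in>L. v k)" unfolding S_def n_def by (simp add: sum_subtractf)
  then show ?thesis using S0 Leq unfolding n_def c_def by simp
qed


lemma bin_idx_eq:
  assumes vb: "valid_binning Bs"
    and bi: "\<forall>i<N. bi i < length Bs \<and> p i \<in> Bs!(bi i)"
    and b: "b < length Bs"
  shows "bin_idx N p (Bs!b) = {i. i<N \<and> bi i = b}"
proof -
  have disj: "\<forall>b<length Bs. \<forall>b'<length Bs. b \<noteq> b' \<longrightarrow> Bs!b \<inter> Bs!b' = {}"
    using vb unfolding valid_binning_def by blast
  show ?thesis unfolding bin_idx_def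
  proof (intro set_eqI iffI)
    fix i assume "i \<in> {i. i < N \<and> p i \<in> Bs ! b}"
    then have i: "i < N" "p i \<in> Bs!b" by auto
    have "bi i = b"
    proof (rule ccontr)
      assume ne: "bi i \<noteq> b"
      have "bi i < length Bs" "p i \<in> Bs!(bi i)" using bi i by auto
      then have "Bs!(bi i) \<inter> Bs!b = {}" using disj b ne by auto
      then show False using i \<open>p i \<in> Bs!(bi i)\<close> by auto
    qed
    then show "i \<in> {i. i<N \<and> bi i = b}" using i by auto
  next
    fix i assume "i \<in> {i. i<N \<and> bi i = b}"
    then show "i \<in> {i. i < N \<and> p i \<in> Bs ! b}" using bi by auto
  qed
qed

lemma obj_formula:
  assumes vb: "valid_binning Bs"
    and bi: "\<forall>i<N. bi i < length Bs \<and> p i \<in> Bs!(bi i)"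
  shows "binning_objective N p y Bs = (\<Sum>i<N. (y i - bin_prob N p y (Bs!(bi i)))^2) / real N"
proof -
  have trm: "real (bin_count N p (Bs!b)) / real N * bin_var N p y (Bs!b)
      = (\<Sum>i\<in>{i. i<N \<and> bi i = b}. (y i - bin_prob N p y (Bs!(bi i)))^2) / real N"
    if b: "b < length Bs" for b
  proof -
    have eq: "bin_idx N p (Bs!b) = {i. i<N \<and> bi i = b}" using bin_idx_eq[OF vb bi b] .
    have fin: "finite (bin_idx N p (Bs!b))" unfolding eq by auto
    have s: "(\<Sum>i\<in>{i. i<N \<and> bi i = b}. (y i - bin_prob N p y (Bs!(bi i)))^2)
        = (\<Sum>i\<in>bin_idx N p (Bs!b). (y i - bin_prob N p y (Bs!b))^2)"
      unfolding eq by (rule sum.cong) auto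
    show ?thesis
    proof (cases "bin_count N p (Bs!b) = 0")
      case True
      then have "bin_idx N p (Bs!b) = {}" using fin unfolding bin_count_def by simp
      then show ?thesis unfolding s using True by simp
    next
      case False
      then show ?thesis unfolding s bin_var_def bin_count_def by simp
    qed
  qed
  have "binning_objective N p y Bs
      = (\<Sum>b<length Bs. (\<Sum>i\<in>{i. i<N \<and> bi i = b}. (y i - bin_prob N p y (Bs!(bi i)))^2) / real N)"
    unfolding binning_objective_def by (rule sum.cong[OF refl], rule trm, simp)
  also have "\<dots> = (\<Sum>b<length Bs. (\<Sum>i\<in>{i. i \<in> {..<N} \<and> bi i = b}. (y i - bin_prob N p y (Bs!(bi i)))^2)) / real N"
    by (simp add: sum_divide_distrib)
  also have "(\<Sum>b<length Bs. (\<Sum>i\<in>{i. i \<in> {..<N} \<and> bi i = b}. (y i - bin_prob N p y (Bs!(bi i)))^2))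
      = (\<Sum>i<N. (y i - bin_prob N p y (Bs!(bi i)))^2)"
    by (rule sum.group) (use bi in auto)
  finally show ?thesis .
qed

lemma bi_mono:
  assumes vb: "valid_binning Bs"
    and bi: "\<forall>i<N. bi i < length Bs \<and> p i \<in> Bs!(bi i)"
    and ij: "i < N" "j < N" "p i \<le> p j"
  shows "bi i \<le> bi j"
proof (rule ccontr)
  assume "\<not> bi i \<le> bi j"
  then have "bi j < bi i" by simp
  moreover have "bi i < length Bs" using bi ij by auto
  moreover have ord: "\<forall>b b'. b < b' \<and> b' < length Bs \<longrightarrow> (\<forall>x\<in>Bs!b. \<forall>x'\<in>Bs!b'. x < x')"
    using vb unfolding valid_binning_def by auto
  moreover have "p j \<in> Bs!(bi j)" "p i \<in> Bs!(bi i)" using bi ij by auto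
  ultimately have "p j < p i" by blast
  then show False using ij by simp
qed

lemma bi_exists:
  assumes vb: "valid_binning Bs" and pr: "\<forall>i<N. p i \<in> {0..1}"
  shows "\<exists>bi. \<forall>i<N. bi i < length Bs \<and> p i \<in> Bs!(bi i)"
proof -
  have "\<forall>i. \<exists>b. i < N \<longrightarrow> b < length Bs \<and> p i \<in> Bs!b"
  proof
    fix i
    show "\<exists>b. i < N \<longrightarrow> b < length Bs \<and> p i \<in> Bs!b"
    proof (cases "i < N")
      case True
      then have "p i \<in> (\<Union>b<length Bs. Bs!b)" using vb pr unfolding valid_binning_def by auto
      then show ?thesis by auto
    qed auto
  qed
  then show ?thesis by metis
qed

lemma lower:
  assumes fb: "feasible_binning N p y Bs"
    and p_range: "\<forall>i<N. p i \<in> {0..1}"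
    and sort_perm: "bij_betw \<sigma> {..<N} {..<N}"
    and sorted: "strict_mono_on {..<N} (\<lambda>k. p (\<sigma> k))"
    and fit: "isotonic_fit N (\<lambda>k. y (\<sigma> k)) yhat"
  shows "(\<Sum>k<N. (yhat k - y (\<sigma> k))^2) / real N \<le> binning_objective N p y Bs"
proof -
  have vb: "valid_binning Bs" and mb: "monotone_bins N p y Bs" using fb unfolding feasible_binning_def by auto
  obtain bi where bi: "\<forall>i<N. bi i < length Bs \<and> p i \<in> Bs!(bi i)" using bi_exists[OF vb p_range] by blast
  define z where "z = (\<lambda>k. bin_prob N p y (Bs!(bi (\<sigma> k))))"
  have sig: "\<sigma> k < N" if "k < N" for k using sort_perm that unfolding bij_betw_def by auto
  have cpos: "bin_count N p (Bs!(bi i)) > 0" if "i < N" for i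
  proof -
    have "i \<in> bin_idx N p (Bs!(bi i))" unfolding bin_idx_def using bi that by auto
    moreover have "finite (bin_idx N p (Bs!(bi i)))" unfolding bin_idx_def by auto
    ultimately show ?thesis unfolding bin_count_def by (auto simp: card_gt_0_iff)
  qed
  have "nondecr_on N z" unfolding nondecr_on_def
  proof (intro allI impI)
    fix k k' assume kk: "k \<le> k' \<and> k' < N"
    have "p (\<sigma> k) \<le> p (\<sigma> k')"
    proof (cases "k = k'")
      case False
      then have "k < k'" using kk by simp
      then have "p (\<sigma> k) < p (\<sigma> k')" using sorted kk unfolding strict_mono_on_def by simp
      then show ?thesis by simp
    qed simp
    then have le: "bi (\<sigma> k) \<le> bi (\<sigma> k')" using bi_mono[OF vb bi] sig kk by auto
    show "z k \<le> z k'"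
    proof (cases "bi (\<sigma> k) = bi (\<sigma> k')")
      case True then show ?thesis unfolding z_def by simp
    next
      case False
      then have "bi (\<sigma> k) < bi (\<sigma> k')" using le by simp
      moreover have "bi (\<sigma> k') < length Bs" using bi sig kk by auto
      ultimately show ?thesis unfolding z_def using mb cpos sig kk
        unfolding monotone_bins_def by auto
    qed
  qed
  then have le: "(\<Sum>k<N. (yhat k - y (\<sigma> k))^2) \<le> (\<Sum>k<N. (z k - y (\<sigma> k))^2)"
    using fit unfolding isotonic_fit_def by auto
  also have "\<dots> = (\<Sum>k<N. (y (\<sigma> k) - bin_prob N p y (Bs!(bi (\<sigma> k))))^2)"
    unfolding z_def by (simp add: power2_commute)
  also have "\<dots> = (\<Sum>i<N. (y i - bin_prob N p y (Bs!(bi i)))^2)"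
    by (rule sum.reindex_bij_betw[OF sort_perm])
  finally have "(\<Sum>k<N. (yhat k - y (\<sigma> k))^2) / real N \<le> (\<Sum>i<N. (y i - bin_prob N p y (Bs!(bi i)))^2) / real N"
    by (simp add: divide_right_mono)
  then show ?thesis using obj_formula[OF vb bi] by simp
qed


lemma chain_eq:
  fixes f :: "nat \<Rightarrow> real"
  assumes "k \<le> k'" and H: "\<forall>c. k < c \<and> c \<le> k' \<longrightarrow> f (c-1) = f c"
  shows "f k' = f k"
proof -
  have "f (k + d) = f k" if "k + d \<le> k'" for d
    using that
  proof (induction d)
    case 0 show ?case by simp
  next
    case (Suc d)
    then have "f (k+d) = f k" by simp
    moreover have "f (k + Suc d - 1) = f (k + Suc d)" using H[rule_format, of "k + Suc d"] Suc.prems by simp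
    ultimately show ?case by simp
  qed
  from this[of "k' - k"] assms(1) show ?thesis by simp
qed

lemma pava_props:
  fixes N :: nat and p y yhat :: "nat \<Rightarrow> real" and \<sigma> :: "nat \<Rightarrow> nat"
  assumes p_range: "\<forall>i<N. p i \<in> {0..1}"
    and sort_perm: "bij_betw \<sigma> {..<N} {..<N}"
    and sorted: "strict_mono_on {..<N} (\<lambda>k. p (\<sigma> k))"
    and fit: "isotonic_fit N (\<lambda>k. y (\<sigma> k)) yhat"
  shows "feasible_binning N p y (pava_bins N (\<lambda>k. p (\<sigma> k)) yhat)
    \<and> binning_objective N p y (pava_bins N (\<lambda>k. p (\<sigma> k)) yhat) = (\<Sum>k<N. (yhat k - y (\<sigma> k))^2) / real N"
proof -
  define q where "q = (\<lambda>k. p (\<sigma> k))"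
  define C where "C = {k. 0 < k \<and> k < N \<and> yhat (k - 1) \<noteq> yhat k}"
  define mid where "mid = (\<lambda>k. (q (k - 1) + q k) / 2)"
  define T where "T = mid ` C"
  define ts where "ts = sorted_list_of_set T"
  define m where "m = length ts"
  define PB where "PB = pava_bins N (\<lambda>k. p (\<sigma> k)) yhat"
  have PBdef: "PB = bins_of_thresholds ts"
    unfolding PB_def pava_bins_def pava_thresholds_def ts_def T_def mid_def C_def q_def by simp
  have sig: "\<sigma> k < N" if "k < N" for k using sort_perm that unfolding bij_betw_def by auto
  have qlt: "q k < q k'" if "k < k'" "k' < N" for k k'
    using sorted that unfolding strict_mono_on_def q_def by simp
  have qle: "q k \<le> q k'" if "k \<le> k'" "k' < N" for k k'
    using qlt[of k k'] that by (cases "k = k'") auto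
  have q01: "0 \<le> q k \<and> q k \<le> 1" if "k < N" for k
    using p_range sig[OF that] unfolding q_def by auto
  have nd: "yhat k \<le> yhat k'" if "k \<le> k'" "k' < N" for k k'
    using fit that unfolding isotonic_fit_def nondecr_on_def by auto
  have finC: "finite C" unfolding C_def by auto
  have finT: "finite T" unfolding T_def using finC by auto
  have setts: "set ts = T" unfolding ts_def using finT by simp
  have sts: "sorted_wrt (<) ts" unfolding ts_def by (rule strict_sorted_list_of_set)
  have tsT: "ts!i \<in> T" if "i < m" for i using setts that unfolding m_def by (metis nth_mem)
  have Tts: "\<exists>i<m. ts!i = t" if "t \<in> T" for t using setts that unfolding m_def by (metis in_set_conv_nth)
  have tslt: "ts!i < ts!j" if "i < j" "j < m" for i j
    using sorted_wrt_nth_less[OF sts that[unfolded m_def]] .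
  have tsle: "ts!i \<le> ts!j" if "i \<le> j" "j < m" for i j
    using tslt[of i j] that by (cases "i = j") auto
  have tslt_iff: "ts!i < ts!j \<Longrightarrow> i < j" if "i < m" "j < m" for i j
    using tsle[of j i] that by (metis linorder_not_le)
  have midC: "q (c-1) < mid c \<and> mid c < q c" if "c \<in> C" for c
  proof -
    have "c - 1 < c" "c < N" using that unfolding C_def by auto
    then have "q (c-1) < q c" using qlt by blast
    then show ?thesis unfolding mid_def by simp
  qed
  have T01: "0 < t \<and> t < 1" if tT: "t \<in> T" for t
  proof -
    obtain c where c: "c \<in> C" "t = mid c" using tT unfolding T_def by auto
    have "c < N" "c - 1 < N" using c unfolding C_def by auto
    then show ?thesis proof -
      have "0 \<le> q (c-1)" "q c \<le> 1" using q01 \<open>c < N\<close> \<open>c - 1 < N\<close> by auto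
      then show ?thesis using midC[OF c(1)] c(2) by linarith
    qed
  qed
  have ts01: "0 < ts!i \<and> ts!i < 1" if "i < m" for i using T01 tsT that by blast
  have lenPB: "length PB = Suc m" unfolding PBdef bins_of_thresholds_def m_def by simp
  have PBnth: "PB!j = (if j = m then {(if j = 0 then 0 else ts!(j-1))..1}
        else {(if j = 0 then 0 else ts!(j-1))..<ts!j})" if "j < Suc m" for j
    unfolding PBdef bins_of_thresholds_def m_def using that[unfolded m_def]
    by (simp add: Let_def nth_append del: upt_Suc)
  have mem: "x \<in> PB!j \<longleftrightarrow> (if j = 0 then 0 else ts!(j-1)) \<le> x \<and> (if j = m then x \<le> 1 else x < ts!j)"
    if "j < Suc m" for j x
    using PBnth[OF that] by auto
  have ordPB: "x < x'" if "b < b'" "b' < Suc m" "x \<in> PB!b" "x' \<in> PB!b'" for b b' x x'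
  proof -
    have "x < ts!b" using mem[of b x] that by auto
    moreover have "ts!(b'-1) \<le> x'" using mem[of b' x'] that by auto
    moreover have "ts!b \<le> ts!(b'-1)" using tsle that by auto
    ultimately show ?thesis by simp
  qed
  have uniq: "a = b" if "a < Suc m" "b < Suc m" "x \<in> PB!a" "x \<in> PB!b" for a b x
    using ordPB[of a b x x] ordPB[of b a x x] that by (metis less_irrefl linorder_neqE_nat)
  have vb: "valid_binning PB"
    unfolding valid_binning_def
  proof (intro conjI)
    show "PB \<noteq> []" using lenPB by auto
    show "\<forall>b<length PB. is_interval (PB ! b)"
      using PBnth lenPB by (simp add: is_interval_convex_1)
    show "\<forall>b<length PB. \<forall>b'<length PB. b \<noteq> b' \<longrightarrow> PB ! b \<inter> PB ! b' = {}"
      proof (intro allI impI)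
      fix b b' assume bb: "b < length PB" "b' < length PB" "b \<noteq> b'"
      show "PB ! b \<inter> PB ! b' = {}"
      proof (rule ccontr)
        assume "PB ! b \<inter> PB ! b' \<noteq> {}"
        then obtain x where "x \<in> PB!b" "x \<in> PB!b'" by blast
        then have "b = b'" using uniq[of b b' x] bb lenPB by simp
        then show False using bb by simp
      qed
    qed
    show "\<forall>b b'. b < b' \<and> b' < length PB \<longrightarrow> (\<forall>x\<in>PB ! b. \<forall>x'\<in>PB ! b'. x < x')"
      using ordPB lenPB by auto
    show "(\<Union>b<length PB. PB ! b) = {0..1}"
    proof (intro set_eqI iffI)
      fix x assume "x \<in> (\<Union>b<length PB. PB ! b)"
      then obtain j where j: "j < Suc m" "x \<in> PB!j" using lenPB by auto
      have "0 \<le> x"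
      proof (cases "j = 0")
        case True then show ?thesis using mem[OF j(1), of x] j by simp
      next
        case False
        then have "j - 1 < m" using j(1) by simp
        then show ?thesis using mem[OF j(1), of x] j ts01[of "j-1"] False by simp
      qed
      moreover have "x \<le> 1" using mem[OF j(1), of x] j ts01[of j] by (auto split: if_splits)
      ultimately show "x \<in> {0..1}" by simp
    next
      fix x :: real assume x: "x \<in> {0..1}"
      define j where "j = (LEAST j. j = m \<or> x < ts!j)"
      have jm: "j \<le> m" unfolding j_def by (rule Least_le) simp
      have jP: "j = m \<or> x < ts!j" unfolding j_def by (rule LeastI[of _ m]) simp
      have lo: "ts!(j-1) \<le> x" if "j > 0"
      proof -
        have "\<not> (j - 1 = m \<or> x < ts!(j-1))" unfolding j_def
          by (rule not_less_Least) (use that j_def in auto)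
        then show ?thesis by simp
      qed
      have "x \<in> PB!j" using mem[of j x] jm jP lo x by auto
      then show "x \<in> (\<Union>b<length PB. PB ! b)" using jm lenPB by auto
    qed
  qed
  obtain bi where bi: "\<forall>i<N. bi i < length PB \<and> p i \<in> PB!(bi i)"
    using bi_exists[OF vb p_range] by blast
  have biq: "bi (\<sigma> k) < Suc m \<and> q k \<in> PB!(bi (\<sigma> k))" if "k < N" for k
    using bi sig[OF that] lenPB unfolding q_def by auto
  have same1: "bi (\<sigma> k) = bi (\<sigma> k') \<longleftrightarrow> yhat k = yhat k'" if kk: "k \<le> k'" "k' < N" for k k'
  proof
    assume eqy: "yhat k = yhat k'"
    have noT: "\<not> (q k \<le> t \<and> t \<le> q k')" if tT: "t \<in> T" for t
    proof -
      obtain c where c: "c \<in> C" "t = mid c" using tT unfolding T_def by auto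
      have cN: "0 < c" "c < N" "yhat (c-1) \<noteq> yhat c" using c unfolding C_def by auto
      show ?thesis
      proof (cases "c \<le> k")
        case True
        then have "q c \<le> q k" using qle kk by auto
        then show ?thesis using midC[OF c(1)] c(2) by auto
      next
        case False
        show ?thesis
        proof (cases "c > k'")
          case True
          then have "q k' \<le> q (c-1)" using qle cN by auto
          then show ?thesis using midC[OF c(1)] c(2) by auto
        next
          case False2: False
          have "yhat k \<le> yhat (c-1)" using nd[of k "c-1"] False cN by auto
          moreover have "yhat (c-1) \<le> yhat c" using nd[of "c-1" c] cN by auto
          moreover have "yhat c \<le> yhat k'" using nd[of c k'] False2 kk by auto
          ultimately show ?thesis using eqy cN by auto
        qed
      qed
    qed
    define j where "j = bi (\<sigma> k)"
    have j: "j < Suc m" "q k \<in> PB!j" using biq kk unfolding j_def by auto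
    have kin: "(if j = 0 then 0 else ts!(j-1)) \<le> q k \<and> (if j = m then q k \<le> 1 else q k < ts!j)"
      using mem[OF j(1)] j(2) by blast
    have "q k \<le> q k'" using qle kk by auto
    moreover have "q k' \<le> 1" using q01 kk by auto
    moreover have "q k' < ts!j" if "j \<noteq> m"
    proof -
      have "ts!j \<in> T" using tsT j(1) that by auto
      then have "\<not> (q k \<le> ts!j \<and> ts!j \<le> q k')" by (rule noT)
      moreover have "q k < ts!j" using kin that by simp
      ultimately show ?thesis by linarith
    qed
    ultimately have "q k' \<in> PB!j" using mem[OF j(1)] kin by auto
    then show "bi (\<sigma> k) = bi (\<sigma> k')" using uniq[OF j(1)] biq[OF kk(2)] j_def by blast
  next
    assume eqb: "bi (\<sigma> k) = bi (\<sigma> k')"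
    show "yhat k = yhat k'"
    proof (rule ccontr)
      assume ne: "yhat k \<noteq> yhat k'"
      have "\<not> (\<forall>c. k < c \<and> c \<le> k' \<longrightarrow> yhat (c-1) = yhat c)"
        using chain_eq[OF kk(1), of yhat] ne by auto
      then obtain c where c: "k < c" "c \<le> k'" "yhat (c-1) \<noteq> yhat c" by auto
      have cC: "c \<in> C" unfolding C_def using c kk by auto
      then have "mid c \<in> T" unfolding T_def by auto
      then obtain i where i: "i < m" "ts!i = mid c" using Tts by blast
      have "q k \<le> q (c-1)" using qle c kk by auto
      then have lt1: "q k < ts!i" using midC[OF cC] i by auto
      have "q c \<le> q k'" using qle c kk by auto
      then have lt2: "ts!i < q k'" using midC[OF cC] i by auto
      define j where "j = bi (\<sigma> k)"
      have j: "j < Suc m" "q k \<in> PB!j" "q k' \<in> PB!j"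
        using biq[of k] biq[of k'] kk unfolding j_def eqb by auto
      have ji: "j \<le> i"
      proof (cases "j = 0")
        case False
        then have "ts!(j-1) \<le> q k" using mem[OF j(1)] j(2) by auto
        then have "ts!(j-1) < ts!i" using lt1 by simp
        then have "j - 1 < i" using tslt_iff[of "j-1" i] i j(1) False by auto
        then show ?thesis by simp
      qed simp
      then have "j \<noteq> m" using i by simp
      then have "q k' < ts!j" using mem[OF j(1)] j(3) by auto
      moreover have "ts!j \<le> ts!i" using tsle[OF ji i(1)] .
      ultimately show False using lt2 by simp
    qed
  qed
  have same: "bi (\<sigma> k) = bi (\<sigma> k') \<longleftrightarrow> yhat k = yhat k'" if "k < N" "k' < N" for k k'
    using same1[of k k'] same1[of k' k] that by (cases "k \<le> k'") auto
  have prob: "bin_prob N p y (PB!(bi (\<sigma> k))) = yhat k" if k: "k < N" for k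
  proof -
    define L where "L = {k'. k' < N \<and> yhat k' = yhat k}"
    have Lsub: "L \<subseteq> {..<N}" unfolding L_def by auto
    have inj: "inj_on \<sigma> L" using sort_perm Lsub unfolding bij_betw_def by (metis inj_on_subset)
    have kL: "k \<in> L" unfolding L_def using k by auto
    have finL: "finite L" using Lsub finite_subset by blast
    have idx: "bin_idx N p (PB!(bi (\<sigma> k))) = \<sigma> ` L"
    proof -
      have "bin_idx N p (PB!(bi (\<sigma> k))) = {i. i<N \<and> bi i = bi (\<sigma> k)}"
        using bin_idx_eq[OF vb bi] bi sig[OF k] by auto
      also have "\<dots> = \<sigma> ` L"
      proof (intro set_eqI iffI)
        fix i assume "i \<in> {i. i<N \<and> bi i = bi (\<sigma> k)}"
        then have i: "i < N" "bi i = bi (\<sigma> k)" by auto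
        then obtain k' where k': "k' < N" "i = \<sigma> k'" using sort_perm unfolding bij_betw_def
          by (metis imageE lessThan_iff)
        then have "yhat k' = yhat k" using same[OF k'(1) k] i by simp
        then show "i \<in> \<sigma> ` L" using k' unfolding L_def by auto
      next
        fix i assume "i \<in> \<sigma> ` L"
        then obtain k' where k': "k' < N" "yhat k' = yhat k" "i = \<sigma> k'" unfolding L_def by auto
        then show "i \<in> {i. i<N \<and> bi i = bi (\<sigma> k)}" using same[OF k'(1) k] sig by auto
      qed
      finally show ?thesis .
    qed
    have cardpos: "card L > 0" using finL kL card_gt_0_iff by blast
    have "(\<Sum>i\<in>\<sigma> ` L. y i) = (\<Sum>k'\<in>L. y (\<sigma> k'))" by (rule sum.reindex[OF inj, unfolded comp_def])
    also have "\<dots> = real (card L) * yhat k" using level_mean[OF fit k] unfolding L_def by simp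
    finally have s: "(\<Sum>i\<in>\<sigma> ` L. y i) = real (card L) * yhat k" .
    have c: "card (\<sigma> ` L) = card L" using card_image[OF inj] .
    show ?thesis unfolding bin_prob_def bin_count_def idx s c using cardpos by simp
  qed
  have cpos: "bin_count N p (PB!(bi i)) > 0" if "i < N" for i
  proof -
    have "i \<in> bin_idx N p (PB!(bi i))" unfolding bin_idx_def using bi that by auto
    moreover have "finite (bin_idx N p (PB!(bi i)))" unfolding bin_idx_def by auto
    ultimately show ?thesis unfolding bin_count_def by (auto simp: card_gt_0_iff)
  qed
  have mb: "monotone_bins N p y PB"
    unfolding monotone_bins_def
  proof (intro allI impI)
    fix b b' assume h: "b < b' \<and> b' < length PB \<and> 0 < bin_count N p (PB ! b) \<and> 0 < bin_count N p (PB ! b')"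
    have "bin_idx N p (PB!b) \<noteq> {}" using h unfolding bin_count_def by auto
    then obtain i where i: "i < N" "p i \<in> PB!b" unfolding bin_idx_def by auto
    have "bin_idx N p (PB!b') \<noteq> {}" using h unfolding bin_count_def by (metis card.empty less_irrefl)
    then obtain i' where i': "i' < N" "p i' \<in> PB!b'" unfolding bin_idx_def by auto
    have bii: "bi i = b" using uniq[of "bi i" b "p i"] bi i h lenPB by auto
    have bii': "bi i' = b'" using uniq[of "bi i'" b' "p i'"] bi i' h lenPB by auto
    obtain k where k: "k < N" "i = \<sigma> k" using sort_perm i(1) unfolding bij_betw_def by (metis imageE lessThan_iff)
    obtain k' where k': "k' < N" "i' = \<sigma> k'" using sort_perm i'(1) unfolding bij_betw_def by (metis imageE lessThan_iff)
    have "k \<le> k'"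
    proof (rule ccontr)
      assume "\<not> k \<le> k'"
      then have "q k' \<le> q k" using qle k by auto
      then have "bi i' \<le> bi i" using bi_mono[OF vb bi i'(1) i(1)] k k' unfolding q_def by simp
      then show False using bii bii' h by simp
    qed
    then have "yhat k \<le> yhat k'" using nd k' by auto
    then show "bin_prob N p y (PB ! b) \<le> bin_prob N p y (PB ! b')"
      using prob[OF k(1)] prob[OF k'(1)] k k' bii bii' by simp
  qed
  have "binning_objective N p y PB = (\<Sum>i<N. (y i - bin_prob N p y (PB!(bi i)))^2) / real N"
    using obj_formula[OF vb bi] .
  also have "(\<Sum>i<N. (y i - bin_prob N p y (PB!(bi i)))^2) = (\<Sum>k<N. (y (\<sigma> k) - bin_prob N p y (PB!(bi (\<sigma> k))))^2)"
    by (rule sum.reindex_bij_betw[OF sort_perm, symmetric])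
  also have "\<dots> = (\<Sum>k<N. (yhat k - y (\<sigma> k))^2)"
    by (rule sum.cong) (auto simp: prob power2_commute)
  finally have "binning_objective N p y PB = (\<Sum>k<N. (yhat k - y (\<sigma> k))^2) / real N" .
  then show ?thesis using vb mb unfolding feasible_binning_def PB_def by simp
qed


theorem mainTheorem1:
  fixes N :: nat and p y yhat :: "nat \<Rightarrow> real" and \<sigma> :: "nat \<Rightarrow> nat"
  assumes p_range: "\<forall>i<N. p i \<in> {0..1}"
    and y_bin: "\<forall>i<N. y i \<in> {0, 1}"
    and sort_perm: "bij_betw \<sigma> {..<N} {..<N}"
    and sorted: "strict_mono_on {..<N} (\<lambda>k. p (\<sigma> k))"
    and fit: "isotonic_fit N (\<lambda>k. y (\<sigma> k)) yhat"
  shows "feasible_binning N p y (pava_bins N (\<lambda>k. p (\<sigma> k)) yhat)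
    \<and> (\<forall>Bs. feasible_binning N p y Bs \<longrightarrow>
          binning_objective N p y (pava_bins N (\<lambda>k. p (\<sigma> k)) yhat) \<le> binning_objective N p y Bs)"
  using pava_props[OF p_range sort_perm sorted fit] lower[OF _ p_range sort_perm sorted fit] by auto

end
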